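(* For every $\varepsilon>0$ there is $\gamma>0$ such that for every $\eta>0$ there exists $\delta>0$ such that for all $n>1/\delta$ and all $\mu\in\mathcal P(\Omega^n)$ the following holds. If $\mu$ is $(\delta,2)$-symmetric, then every $(\gamma,2)$-state $S$ of $\mu$ with $\mu(S)\ge\eta$ satisfies $\frac1n\sum_{x\in[n]}\|\mu_{\downarrow x}[\cdot|S]-\mu_{\downarrow x}\|_{TV}<\varepsilon$.
   Context: $\Omega$ is a fixed finite nonempty set, $\mathcal P(\mathcal X)$ the set of probability measures on a finite set $\mathcal X$, $\|\cdot\|_{TV}$ total variation. For $\mu\in\mathcal P(\Omega^n)$ and $S\subset\Omega^n$ with $\mu(S)>0$, $\mu[\cdot|S]$ is the conditional measure; for $x_1,\dots,x_k\in[n]$, $\mu_{\downarrow\{x_1,\dots,x_k\}}[\cdot|S]$ denotes the joint law of $(\boldsymbol\sigma(x_1),\dots,\boldsymbol\sigma(x_k))$ for $\boldsymbol\sigma\sim\mu[\cdot|S]$, $\mu_{\downarrow x}[\cdot|S]$ the law of $\boldsymbol\sigma(x)$, and $\mu_{\downarrow x}$ the law of $\boldsymbol\sigma(x)$ under $\mu$. A set $S\subset\Omega^n$ is an $(\varepsilon,k)$-state of $\mu$ if $\mu(S)>0$ and $\frac1{n^k}\sum_{x_1,\dots,x_k\in[n]}\|\mu_{\downarrow\{x_1,\dots,x_k\}}[\cdot|S]-\mu_{\downarrow x_1}[\cdot|S]\otimes\cdots\otimes\mu_{\downarrow x_k}[\cdot|S]\|_{TV}<\varepsilon$. The measure $\mu$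 is $(\varepsilon,k)$-symmetric if $\Omega^n$ itself is an $(\varepsilon,k)$-state of $\mu$. *)

theory Defs
  imports "HOL-Analysis.Analysis"
begin

text \<open>Configurations in \<Omega>^n: functions on [n] = {0..<n}, extended by undefined.
  \<Omega> is a finite type 'a (nonempty as every HOL type).\<close>
definition cfgs :: "nat \<Rightarrow> (nat \<Rightarrow> 'a) set" where
  "cfgs n = PiE {0..<n} (\<lambda>_. UNIV)"

definition is_prob :: "nat \<Rightarrow> ((nat \<Rightarrow> 'a::finite) \<Rightarrow> real) \<Rightarrow> bool" where
  "is_prob n \<mu> \<longleftrightarrow> (\<forall>\<sigma>\<in>cfgs n. \<mu> \<sigma> \<ge> 0) \<and> (\<forall>\<sigma>. \<sigma> \<notin> cfgs n \<longrightarrow> \<mu> \<sigma> = 0)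
      \<and> (\<Sum>\<sigma>\<in>cfgs n. \<mu> \<sigma>) = 1"

definition mass :: "((nat \<Rightarrow> 'a) \<Rightarrow> real) \<Rightarrow> (nat \<Rightarrow> 'a) set \<Rightarrow> real" where
  "mass \<mu> S = (\<Sum>\<sigma>\<in>S. \<mu> \<sigma>)"

definition tv :: "('b::finite \<Rightarrow> real) \<Rightarrow> ('b \<Rightarrow> real) \<Rightarrow> real" where
  "tv p q = (\<Sum>z\<in>UNIV. \<bar>p z - q z\<bar>) / 2"

definition marg1 :: "((nat \<Rightarrow> 'a) \<Rightarrow> real) \<Rightarrow> (nat \<Rightarrow> 'a) set \<Rightarrow> nat \<Rightarrow> 'a \<Rightarrow> real" where
  "marg1 \<mu> S x = (\<lambda>a. mass \<mu> {\<sigma>\<in>S. \<sigma> x = a} / mass \<mu> S)"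

definition marg2 :: "((nat \<Rightarrow> 'a) \<Rightarrow> real) \<Rightarrow> (nat \<Rightarrow> 'a) set \<Rightarrow> nat \<Rightarrow> nat \<Rightarrow> 'a \<times> 'a \<Rightarrow> real" where
  "marg2 \<mu> S x y = (\<lambda>(a, b). mass \<mu> {\<sigma>\<in>S. \<sigma> x = a \<and> \<sigma> y = b} / mass \<mu> S)"

definition state2 :: "nat \<Rightarrow> ((nat \<Rightarrow> 'a::finite) \<Rightarrow> real) \<Rightarrow> real \<Rightarrow> (nat \<Rightarrow> 'a) set \<Rightarrow> bool" where
  "state2 n \<mu> \<epsilon> S \<longleftrightarrow> S \<subseteq> cfgs n \<and> mass \<mu> S > 0 \<and>
     (\<Sum>x\<in>{0..<n}. \<Sum>y\<in>{0..<n}.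
        tv (marg2 \<mu> S x y) (\<lambda>(a, b). marg1 \<mu> S x a * marg1 \<mu> S y b)) / real n ^ 2 < \<epsilon>"

definition symmetric2 :: "nat \<Rightarrow> ((nat \<Rightarrow> 'a::finite) \<Rightarrow> real) \<Rightarrow> real \<Rightarrow> bool" where
  "symmetric2 n \<mu> \<epsilon> \<longleftrightarrow> state2 n \<mu> \<epsilon> (cfgs n)"

end

theory Submission
  imports Defs
begin

lemma fiber:
  fixes f :: "'s \<Rightarrow> 'b::finite" and w :: "'s \<Rightarrow> real"
  assumes "finite S"
  shows "(\<Sum>\<sigma>\<in>S. w \<sigma> * h (f \<sigma>)) = (\<Sum>b\<in>UNIV. h b * (\<Sum>\<sigma>\<in>{\<sigma>\<in>S. f \<sigma> = b}. w \<sigma>))"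
proof -
  have "(\<Sum>\<sigma>\<in>S. w \<sigma> * h (f \<sigma>)) = (\<Sum>b\<in>UNIV. \<Sum>\<sigma>\<in>{\<sigma>\<in>S. f \<sigma> = b}. w \<sigma> * h (f \<sigma>))"
    using sum.group[OF assms, of UNIV f "\<lambda>\<sigma>. w \<sigma> * h (f \<sigma>)"] by simp
  also have "\<dots> = (\<Sum>b\<in>UNIV. h b * (\<Sum>\<sigma>\<in>{\<sigma>\<in>S. f \<sigma> = b}. w \<sigma>))"
    by (rule sum.cong) (auto simp: sum_distrib_left mult.commute intro!: sum.cong)
  finally show ?thesis .
qed

lemma wcs:
  fixes w Y :: "'s \<Rightarrow> real"
  assumes "finite S" "\<And>s. s \<in> S \<Longrightarrow> w s \<ge> 0" "(\<Sum>s\<in>S. w s) > 0"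
  shows "(\<Sum>s\<in>S. w s * Y s)^2 \<le> (\<Sum>s\<in>S. w s) * (\<Sum>s\<in>S. w s * (Y s)^2)"
proof -
  define W where "W = (\<Sum>s\<in>S. w s)"
  define A where "A = (\<Sum>s\<in>S. w s * Y s)"
  define B where "B = (\<Sum>s\<in>S. w s * (Y s)^2)"
  define c where "c = A / W"
  have "0 \<le> (\<Sum>s\<in>S. w s * (Y s - c)^2)"
    using assms(2) by (intro sum_nonneg) auto
  also have "\<dots> = B - 2 * c * A + c^2 * W"
    unfolding A_def B_def W_def
    by (simp add: power2_eq_square algebra_simps sum.distrib sum_subtractf sum_distrib_left)
  also have "\<dots> = B - A^2 / W" using assms(3) unfolding c_def W_def[symmetric]
    by (simp add: field_simps power2_eq_square)
  finally have "A^2 / W \<le> B" by simp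
  then show ?thesis using assms(3) unfolding W_def[symmetric] A_def[symmetric] B_def[symmetric]
    by (simp add: field_simps)
qed

lemma cov_bound:
  fixes w :: "(nat \<Rightarrow> 'a::finite) \<Rightarrow> real" and g1 g2 :: "'a \<Rightarrow> real" and x y :: nat
  assumes fin: "finite C" and w1: "(\<Sum>\<sigma>\<in>C. w \<sigma>) = 1"
    and b1: "\<And>a. \<bar>g1 a\<bar> \<le> 1" and b2: "\<And>a. \<bar>g2 a\<bar> \<le> 1"
  defines "E1 \<equiv> (\<Sum>a\<in>UNIV. g1 a * mass w {\<sigma>\<in>C. \<sigma> x = a})"
    and "E2 \<equiv> (\<Sum>a\<in>UNIV. g2 a * mass w {\<sigma>\<in>C. \<sigma> y = a})"
  shows "(\<Sum>\<sigma>\<in>C. w \<sigma> * ((g1 (\<sigma> x) - E1) * (g2 (\<sigma> y) - E2)))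
     \<le> (\<Sum>p\<in>UNIV. \<bar>mass w {\<sigma>\<in>C. \<sigma> x = fst p \<and> \<sigma> y = snd p}
            - mass w {\<sigma>\<in>C. \<sigma> x = fst p} * mass w {\<sigma>\<in>C. \<sigma> y = snd p}\<bar>)"
proof -
  define P where "P p = mass w {\<sigma>\<in>C. \<sigma> x = fst p \<and> \<sigma> y = snd p}" for p :: "'a \<times> 'a"
  define M where "M p = mass w {\<sigma>\<in>C. \<sigma> x = fst p} * mass w {\<sigma>\<in>C. \<sigma> y = snd p}" for p :: "'a \<times> 'a"
  have s1: "(\<Sum>\<sigma>\<in>C. w \<sigma> * g1 (\<sigma> x)) = E1"
    using fiber[OF fin, of w g1 "\<lambda>\<sigma>. \<sigma> x"] unfolding E1_def mass_def by simp
  have s2: "(\<Sum>\<sigma>\<in>C. w \<sigma> * g2 (\<sigma> y)) = E2"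
    using fiber[OF fin, of w g2 "\<lambda>\<sigma>. \<sigma> y"] unfolding E2_def mass_def by simp
  have s12: "(\<Sum>\<sigma>\<in>C. w \<sigma> * (g1 (\<sigma> x) * g2 (\<sigma> y))) = (\<Sum>p\<in>UNIV. g1 (fst p) * g2 (snd p) * P p)"
    using fiber[OF fin, of w "\<lambda>p. g1 (fst p) * g2 (snd p)" "\<lambda>\<sigma>. (\<sigma> x, \<sigma> y)"]
    unfolding P_def mass_def by (simp add: mult.commute prod_eq_iff)
  have e12: "E1 * E2 = (\<Sum>p\<in>UNIV. g1 (fst p) * g2 (snd p) * M p)"
    unfolding E1_def E2_def M_def sum_product
    by (simp add: sum.cartesian_product UNIV_Times_UNIV[symmetric] del: UNIV_Times_UNIV)
      (simp add: algebra_simps split_beta)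
  have "(\<Sum>\<sigma>\<in>C. w \<sigma> * ((g1 (\<sigma> x) - E1) * (g2 (\<sigma> y) - E2)))
      = (\<Sum>\<sigma>\<in>C. w \<sigma> * (g1 (\<sigma> x) * g2 (\<sigma> y))) - E2 * (\<Sum>\<sigma>\<in>C. w \<sigma> * g1 (\<sigma> x))
        - E1 * (\<Sum>\<sigma>\<in>C. w \<sigma> * g2 (\<sigma> y)) + E1 * E2 * (\<Sum>\<sigma>\<in>C. w \<sigma>)"
    by (simp add: algebra_simps sum.distrib sum_subtractf sum_distrib_left)
  also have "\<dots> = (\<Sum>p\<in>UNIV. g1 (fst p) * g2 (snd p) * (P p - M p))"
    using s1 s2 s12 e12 w1 by (simp add: algebra_simps sum_subtractf)
  also have "\<dots> \<le> (\<Sum>p\<in>UNIV. \<bar>P p - M p\<bar>)"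
  proof (rule sum_mono)
    fix p :: "'a \<times> 'a"
    have "g1 (fst p) * g2 (snd p) * (P p - M p) \<le> \<bar>g1 (fst p) * g2 (snd p) * (P p - M p)\<bar>" by simp
    also have "\<dots> = \<bar>g1 (fst p)\<bar> * \<bar>g2 (snd p)\<bar> * \<bar>P p - M p\<bar>" by (simp add: abs_mult)
    also have "\<dots> \<le> 1 * 1 * \<bar>P p - M p\<bar>"
      using b1 b2 by (intro mult_right_mono mult_mono) auto
    finally show "g1 (fst p) * g2 (snd p) * (P p - M p) \<le> \<bar>P p - M p\<bar>" by simp
  qed
  finally show ?thesis unfolding P_def M_def .
qed

lemma arith_final:
  fixes mS T Q \<eta> \<epsilon> N :: real
  assumes mSpos: "mS > 0" and h: "(mS * 2 * T)^2 \<le> mS * (2 * Q)" and Qb2: "Q < \<eta> * \<epsilon>^2 * N^2"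
    and hm: "\<eta> \<le> mS" and T0: "T \<ge> 0" and npos: "N > 0" and ep: "\<epsilon> > 0"
  shows "T / N < \<epsilon>"
proof -
  have "(mS * 2 * T)^2 = mS * (2 * (mS * (2 * T^2)))"
    by (simp add: power2_eq_square algebra_simps)
  with h have "mS * (2 * (mS * (2 * T^2))) \<le> mS * (2 * Q)" by simp
  then have "2 * (mS * (2 * T^2)) \<le> 2 * Q"
    using mSpos by (rule mult_left_le_imp_le)
  then have h1: "mS * (2 * T^2) \<le> Q" by linarith
  have "\<eta> * (\<epsilon>^2 * N^2) \<le> mS * (\<epsilon>^2 * N^2)" using hm by (intro mult_right_mono) auto
  moreover have "Q < \<eta> * (\<epsilon>^2 * N^2)" using Qb2 by (simp only: mult.assoc)
  ultimately have "mS * (2 * T^2) < mS * (\<epsilon>^2 * N^2)" using h1 by linarith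
  then have "2 * T^2 < \<epsilon>^2 * N^2"
    by (rule mult_left_less_imp_less) (use mSpos in linarith)
  then have "2 * T^2 < (\<epsilon> * N)^2" by (simp only: power_mult_distrib)
  moreover have "T^2 \<le> 2 * T^2" by simp
  ultimately have "T^2 < (\<epsilon> * N)^2" by (meson order.strict_trans1)
  then have "T < \<epsilon> * N" by (rule power2_less_imp_less) (use ep npos in simp)
  then show ?thesis using npos by (simp add: divide_less_eq mult.commute)
qed

theorem corollary2p4:
  shows "\<forall>\<epsilon>>0. \<exists>\<gamma>>0. \<forall>\<eta>>0. \<exists>\<delta>>0. \<forall>(n::nat) (\<mu> :: (nat \<Rightarrow> 'a::finite) \<Rightarrow> real).
     real n > 1 / \<delta> \<longrightarrow> is_prob n \<mu> \<longrightarrow> symmetric2 n \<mu> \<delta> \<longrightarrow>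
     (\<forall>S. state2 n \<mu> \<gamma> S \<longrightarrow> mass \<mu> S \<ge> \<eta> \<longrightarrow>
        (\<Sum>x\<in>{0..<n}. tv (marg1 \<mu> S x) (marg1 \<mu> (cfgs n) x)) / real n < \<epsilon>)"
proof (intro allI impI)
  fix \<epsilon> :: real assume ep: "\<epsilon> > 0"
  show "\<exists>\<gamma>>0. \<forall>\<eta>>0. \<exists>\<delta>>0. \<forall>(n::nat) (\<mu> :: (nat \<Rightarrow> 'a::finite) \<Rightarrow> real).
     real n > 1 / \<delta> \<longrightarrow> is_prob n \<mu> \<longrightarrow> symmetric2 n \<mu> \<delta> \<longrightarrow>
     (\<forall>S. state2 n \<mu> \<gamma> S \<longrightarrow> mass \<mu> S \<ge> \<eta> \<longrightarrow>
        (\<Sum>x\<in>{0..<n}. tv (marg1 \<mu> S x) (marg1 \<mu> (cfgs n) x)) / real n < \<epsilon>)"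
  proof (rule exI[of _ "1::real"], intro conjI allI impI)
    show "(0::real) < 1" by simp
    fix \<eta> :: real assume et: "\<eta> > 0"
    show "\<exists>\<delta>>0. \<forall>(n::nat) (\<mu> :: (nat \<Rightarrow> 'a::finite) \<Rightarrow> real).
     real n > 1 / \<delta> \<longrightarrow> is_prob n \<mu> \<longrightarrow> symmetric2 n \<mu> \<delta> \<longrightarrow>
     (\<forall>S. state2 n \<mu> 1 S \<longrightarrow> mass \<mu> S \<ge> \<eta> \<longrightarrow>
        (\<Sum>x\<in>{0..<n}. tv (marg1 \<mu> S x) (marg1 \<mu> (cfgs n) x)) / real n < \<epsilon>)"
    proof (intro exI[of _ "\<eta> * \<epsilon>^2"] conjI allI impI)
      show "\<eta> * \<epsilon>^2 > 0" using et ep by simp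
      fix n :: nat and \<mu> :: "(nat \<Rightarrow> 'a::finite) \<Rightarrow> real" and S
      assume hn: "real n > 1 / (\<eta> * \<epsilon>^2)" and hp: "is_prob n \<mu>"
        and hsym: "symmetric2 n \<mu> (\<eta> * \<epsilon>^2)" and hS: "state2 n \<mu> 1 S" and hm: "mass \<mu> S \<ge> \<eta>"
      define C where "C = (cfgs n :: (nat \<Rightarrow> 'a) set)"
      have "1 / (\<eta> * \<epsilon>^2) > 0" using et ep by simp
      then have npos: "real n > 0" using hn by linarith
      have finC: "finite C" unfolding C_def cfgs_def by (simp add: finite_PiE)
      have SC: "S \<subseteq> C" and mSpos: "mass \<mu> S > 0" using hS unfolding state2_def C_def by auto
      have finS: "finite S" using finite_subset[OF SC finC] .
      have mC: "mass \<mu> C = 1" and wpos: "\<And>\<sigma>. \<sigma> \<in> C \<Longrightarrow> \<mu> \<sigma> \<ge> 0"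
        using hp unfolding is_prob_def mass_def C_def by auto
      define mS where "mS = mass \<mu> S"
      define m where "m x a = mass \<mu> {\<sigma>\<in>C. \<sigma> x = a}" for x a
      define \<alpha> where "\<alpha> x a = marg1 \<mu> S x a" for x a
      define g where "g x a = sgn (\<alpha> x a - m x a)" for x a
      define E where "E x = (\<Sum>a\<in>UNIV. g x a * m x a)" for x
      define Z where "Z x \<sigma> = g x (\<sigma> x) - E x" for x \<sigma>
      define Y where "Y \<sigma> = (\<Sum>x\<in>{0..<n}. Z x \<sigma>)" for \<sigma>
      define T where "T = (\<Sum>x\<in>{0..<n}. tv (marg1 \<mu> S x) (marg1 \<mu> C x))"
      define Q where "Q = (\<Sum>x\<in>{0..<n}. \<Sum>y\<in>{0..<n}.
        tv (marg2 \<mu> C x y) (\<lambda>(a, b). marg1 \<mu> C x a * marg1 \<mu> C y b))"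
      have gb: "\<bar>g x a\<bar> \<le> 1" for x a unfolding g_def by (simp add: abs_sgn_eq)
      have m1: "marg1 \<mu> C x = m x" for x unfolding marg1_def m_def mC by auto
      have step1: "(\<Sum>\<sigma>\<in>S. \<mu> \<sigma> * Z x \<sigma>) = mS * (2 * tv (marg1 \<mu> S x) (marg1 \<mu> C x))" for x
      proof -
        have a: "(\<Sum>\<sigma>\<in>S. \<mu> \<sigma> * g x (\<sigma> x)) = (\<Sum>a\<in>UNIV. g x a * (\<alpha> x a * mS))"
          using fiber[OF finS, of \<mu> "g x" "\<lambda>\<sigma>. \<sigma> x"] mSpos
          unfolding \<alpha>_def marg1_def mS_def mass_def by simp
        have "(\<Sum>\<sigma>\<in>S. \<mu> \<sigma> * Z x \<sigma>) = (\<Sum>\<sigma>\<in>S. \<mu> \<sigma> * g x (\<sigma> x)) - E x * mS"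
          unfolding Z_def mS_def mass_def by (simp add: algebra_simps sum_subtractf sum_distrib_left)
        also have "\<dots> = mS * (\<Sum>a\<in>UNIV. g x a * (\<alpha> x a - m x a))"
          unfolding a E_def by (simp add: algebra_simps sum_subtractf sum_distrib_left sum_distrib_right)
        also have "\<dots> = mS * (\<Sum>a\<in>UNIV. \<bar>\<alpha> x a - m x a\<bar>)"
          unfolding g_def by (intro arg_cong[where f="\<lambda>t. mS * t"] sum.cong refl) (simp add: sgn_if abs_if)
        also have "\<dots> = mS * (2 * tv (marg1 \<mu> S x) (marg1 \<mu> C x))"
          unfolding tv_def m1 \<alpha>_def by simp
        finally show ?thesis .
      qed
      have A: "(\<Sum>\<sigma>\<in>S. \<mu> \<sigma> * Y \<sigma>) = mS * 2 * T"
        unfolding Y_def T_def sum_distrib_left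
        by (subst sum.swap) (simp add: step1 sum_distrib_left mult.assoc)
      have step2: "(\<Sum>\<sigma>\<in>S. \<mu> \<sigma> * Y \<sigma>)^2 \<le> mS * (\<Sum>\<sigma>\<in>C. \<mu> \<sigma> * (Y \<sigma>)^2)"
      proof -
        have "(\<Sum>\<sigma>\<in>S. \<mu> \<sigma> * Y \<sigma>)^2 \<le> mS * (\<Sum>\<sigma>\<in>S. \<mu> \<sigma> * (Y \<sigma>)^2)"
          using wcs[OF finS, of \<mu> Y] wpos SC mSpos unfolding mS_def mass_def by auto
        also have "\<dots> \<le> mS * (\<Sum>\<sigma>\<in>C. \<mu> \<sigma> * (Y \<sigma>)^2)"
          using mSpos wpos SC finC unfolding mS_def
          by (intro mult_left_mono sum_mono2) auto
        finally show ?thesis .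
      qed
      have step3: "(\<Sum>\<sigma>\<in>C. \<mu> \<sigma> * (Y \<sigma>)^2) \<le> 2 * Q"
      proof -
        have "(\<Sum>\<sigma>\<in>C. \<mu> \<sigma> * (Y \<sigma>)^2) = (\<Sum>x\<in>{0..<n}. \<Sum>y\<in>{0..<n}. \<Sum>\<sigma>\<in>C. \<mu> \<sigma> * (Z x \<sigma> * Z y \<sigma>))"
        proof -
          have "(\<Sum>\<sigma>\<in>C. \<mu> \<sigma> * (Y \<sigma>)^2) = (\<Sum>\<sigma>\<in>C. \<Sum>x\<in>{0..<n}. \<Sum>y\<in>{0..<n}. \<mu> \<sigma> * (Z x \<sigma> * Z y \<sigma>))"
          proof (intro sum.cong refl)
            fix \<sigma> :: "nat \<Rightarrow> 'a"
            have "Y \<sigma> * Y \<sigma> = (\<Sum>x\<in>{0..<n}. \<Sum>y\<in>{0..<n}. Z x \<sigma> * Z y \<sigma>)"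
              unfolding Y_def by (rule sum_product)
            then show "\<mu> \<sigma> * (Y \<sigma>)^2 = (\<Sum>x\<in>{0..<n}. \<Sum>y\<in>{0..<n}. \<mu> \<sigma> * (Z x \<sigma> * Z y \<sigma>))"
              by (simp add: power2_eq_square sum_distrib_left)
          qed
          also have "\<dots> = (\<Sum>x\<in>{0..<n}. \<Sum>\<sigma>\<in>C. \<Sum>y\<in>{0..<n}. \<mu> \<sigma> * (Z x \<sigma> * Z y \<sigma>))"
            by (rule sum.swap)
          also have "\<dots> = (\<Sum>x\<in>{0..<n}. \<Sum>y\<in>{0..<n}. \<Sum>\<sigma>\<in>C. \<mu> \<sigma> * (Z x \<sigma> * Z y \<sigma>))"
            by (intro sum.cong refl sum.swap)
          finally show ?thesis .
        qed
        also have "\<dots> \<le> (\<Sum>x\<in>{0..<n}. \<Sum>y\<in>{0..<n}.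
             2 * tv (marg2 \<mu> C x y) (\<lambda>(a, b). marg1 \<mu> C x a * marg1 \<mu> C y b))"
        proof (intro sum_mono)
          fix x y
          have "(\<Sum>\<sigma>\<in>C. \<mu> \<sigma> * (Z x \<sigma> * Z y \<sigma>))
              \<le> (\<Sum>p\<in>UNIV. \<bar>mass \<mu> {\<sigma>\<in>C. \<sigma> x = fst p \<and> \<sigma> y = snd p}
            - mass \<mu> {\<sigma>\<in>C. \<sigma> x = fst p} * mass \<mu> {\<sigma>\<in>C. \<sigma> y = snd p}\<bar>)"
            using cov_bound[OF finC, of \<mu> "g x" "g y" x y] mC gb
            unfolding Z_def E_def m_def mass_def by simp
          also have "\<dots> = 2 * tv (marg2 \<mu> C x y) (\<lambda>(a, b). marg1 \<mu> C x a * marg1 \<mu> C y b)"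
            unfolding tv_def marg2_def m1 m_def mC by (simp add: split_beta)
          finally show "(\<Sum>\<sigma>\<in>C. \<mu> \<sigma> * (Z x \<sigma> * Z y \<sigma>))
              \<le> 2 * tv (marg2 \<mu> C x y) (\<lambda>(a, b). marg1 \<mu> C x a * marg1 \<mu> C y b)" .
        qed
        also have "\<dots> = 2 * Q" unfolding Q_def by (simp add: sum_distrib_left)
        finally show ?thesis .
      qed
      have Qb: "Q / real n ^ 2 < \<eta> * \<epsilon>^2"
        using hsym unfolding symmetric2_def state2_def Q_def C_def by auto
      have Qb2: "Q < \<eta> * \<epsilon>^2 * real n ^ 2" using Qb npos by (simp add: divide_less_eq)
      have T0: "T \<ge> 0" unfolding T_def tv_def by (intro sum_nonneg divide_nonneg_pos) auto
      have "mS * (\<Sum>\<sigma>\<in>C. \<mu> \<sigma> * (Y \<sigma>)^2) \<le> mS * (2 * Q)"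
        using step3 mSpos unfolding mS_def by (intro mult_left_mono) auto
      then have "(mS * 2 * T)^2 \<le> mS * (2 * Q)"
        using step2 unfolding A by linarith
      then show "(\<Sum>x\<in>{0..<n}. tv (marg1 \<mu> S x) (marg1 \<mu> (cfgs n) x)) / real n < \<epsilon>"
        using arith_final[of mS T Q \<eta> \<epsilon> "real n"] mSpos Qb2 hm T0 npos ep
        unfolding T_def C_def mS_def by blast
    qed
  qed
qed

end
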